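(* Let $q\ge 2$ be an integer and let $\mathcal{R}$ be a finite family of axis-parallel rectangles in general position such that every pair of intersecting rectangles in $\mathcal{R}$ has a corner intersection and no $q+1$ rectangles of $\mathcal{R}$ are pairwise intersecting. Then the arrangement graph $A_{\mathcal{R}}$ satisfies $|V(A_{\mathcal{R}})|\le 4q\cdot|\mathcal{R}|$.
   Context: Rectangles are closed axis-parallel rectangles $X\times Y$; general position means all specifying intervals have pairwise distinct endpoints. Two intersecting rectangles have a corner intersection if one contains one or two corners of the other but neither contains the other (then their boundaries meet exactly twice). A joint is a point where the boundaries of two distinct rectangles of $\mathcal{R}$ intersect. The arrangement graph $A_{\mathcal{R}}$ has the joints as vertices, and $\{u,v\}$ is an edge iff $u,v$ are joints on the boundary of some rectangle of $\mathcal{R}$ with no other joint on that boundary between them. *)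

theory Defs
  imports Complex_Main
begin

text \<open>A closed axis-parallel rectangle X \<times> Y with X = [x1,x2], Y = [y1,y2]
  is given by its specifying intervals ((x1,x2),(y1,y2)).\<close>
type_synonym rect = "(real \<times> real) \<times> (real \<times> real)"

definition xlo :: "rect \<Rightarrow> real" where "xlo r = fst (fst r)"
definition xhi :: "rect \<Rightarrow> real" where "xhi r = snd (fst r)"
definition ylo :: "rect \<Rightarrow> real" where "ylo r = fst (snd r)"
definition yhi :: "rect \<Rightarrow> real" where "yhi r = snd (snd r)"

definition valid_rect :: "rect \<Rightarrow> bool" where
  "valid_rect r \<longleftrightarrow> xlo r < xhi r \<and> ylo r < yhi r"

definition rect_set :: "rect \<Rightarrow> (real \<times> real) set" where
  "rect_set r = {xlo r..xhi r} \<times> {ylo r..yhi r}"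

definition rect_boundary :: "rect \<Rightarrow> (real \<times> real) set" where
  "rect_boundary r = {p \<in> rect_set r.
     fst p = xlo r \<or> fst p = xhi r \<or> snd p = ylo r \<or> snd p = yhi r}"

definition corners :: "rect \<Rightarrow> (real \<times> real) set" where
  "corners r = {(xlo r, ylo r), (xlo r, yhi r), (xhi r, ylo r), (xhi r, yhi r)}"

definition intersect :: "rect \<Rightarrow> rect \<Rightarrow> bool" where
  "intersect r s \<longleftrightarrow> rect_set r \<inter> rect_set s \<noteq> {}"

text \<open>General position: all x-endpoints of the rectangles are pairwise distinct,
  and all y-endpoints are pairwise distinct (as a multiset of endpoints).\<close>
definition general_position :: "rect set \<Rightarrow> bool" where
  "general_position R \<longleftrightarrow>
     inj_on (\<lambda>(r, b::bool). if b then xhi r else xlo r) (R \<times> UNIV) \<and>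
     inj_on (\<lambda>(r, b::bool). if b then yhi r else ylo r) (R \<times> UNIV)"

definition corner_intersection :: "rect \<Rightarrow> rect \<Rightarrow> bool" where
  "corner_intersection r s \<longleftrightarrow> intersect r s \<and>
     \<not> rect_set r \<subseteq> rect_set s \<and> \<not> rect_set s \<subseteq> rect_set r \<and>
     (card (corners s \<inter> rect_set r) \<in> {1, 2} \<or> card (corners r \<inter> rect_set s) \<in> {1, 2})"

text \<open>Joints: points where the boundaries of two distinct rectangles meet;
  these are the vertices of the arrangement graph.\<close>
definition joints :: "rect set \<Rightarrow> (real \<times> real) set" where
  "joints R = {p. \<exists>r\<in>R. \<exists>s\<in>R. r \<noteq> s \<and> p \<in> rect_boundary r \<and> p \<in> rect_boundary s}"

end

theory Submission
  imports Defs
begin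

definition gmap :: "rect \<Rightarrow> real \<times> real \<Rightarrow> rect \<Rightarrow> real \<times> real" where
  "gmap r c s = (if (fst c, if snd c = ylo r then yhi r else ylo r) \<in> rect_set s
     then (if fst c = xlo r then xhi s else xlo s, snd c)
     else (fst c, if snd c = ylo r then yhi s else ylo s))"

lemma gp_facts:
  assumes "general_position R" "r \<in> R" "s \<in> R" "r \<noteq> s"
  shows "xlo r \<noteq> xlo s \<and> xlo r \<noteq> xhi s \<and> xhi r \<noteq> xlo s \<and> xhi r \<noteq> xhi s \<and>
         ylo r \<noteq> ylo s \<and> ylo r \<noteq> yhi s \<and> yhi r \<noteq> ylo s \<and> yhi r \<noteq> yhi s"
proof -
  have i1: "inj_on (\<lambda>(r, b::bool). if b then xhi r else xlo r) (R \<times> UNIV)"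
   and i2: "inj_on (\<lambda>(r, b::bool). if b then yhi r else ylo r) (R \<times> UNIV)"
    using assms(1) unfolding general_position_def by auto
  have "\<And>b1 b2. (\<lambda>(r, b::bool). if b then xhi r else xlo r) (r,b1) \<noteq> (\<lambda>(r, b::bool). if b then xhi r else xlo r) (s,b2)"
    using inj_onD[OF i1] assms by blast
  moreover have "\<And>b1 b2. (\<lambda>(r, b::bool). if b then yhi r else ylo r) (r,b1) \<noteq> (\<lambda>(r, b::bool). if b then yhi r else ylo r) (s,b2)"
    using inj_onD[OF i2] assms by blast
  ultimately show ?thesis
    apply simp
    by (metis (full_types))
qed

lemma cover:
  assumes va: "valid_rect a" and vb: "valid_rect b"
    and d: "xlo a \<noteq> xlo b \<and> xlo a \<noteq> xhi b \<and> xhi a \<noteq> xlo b \<and> xhi a \<noteq> xhi b \<and>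
         ylo a \<noteq> ylo b \<and> ylo a \<noteq> yhi b \<and> yhi a \<noteq> ylo b \<and> yhi a \<noteq> yhi b"
    and pa: "p \<in> rect_set a" and pb: "p \<in> rect_set b"
    and px: "fst p = xlo a \<or> fst p = xhi a" and py: "snd p = ylo b \<or> snd p = yhi b"
    and nc: "\<not> (corners b \<inter> rect_set a = {} \<and> corners a \<inter> rect_set b = {})"
  shows "\<exists>r c s. (r = a \<and> s = b \<or> r = b \<and> s = a) \<and> c \<in> corners r \<and> c \<in> rect_set s \<and> gmap r c s = p"
proof -
  obtain x y where p: "p = (x,y)" by force
  note defs = valid_rect_def rect_set_def corners_def gmap_def
  have ia: "xlo a \<le> x" "x \<le> xhi a" "ylo a \<le> y" "y \<le> yhi a"
   and ib: "xlo b \<le> x" "x \<le> xhi b" "ylo b \<le> y" "y \<le> yhi b"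
    using pa pb p by (auto simp: rect_set_def)
  have la: "xlo a < xhi a" "ylo a < yhi a" and lb: "xlo b < xhi b" "ylo b < yhi b"
    using va vb by (auto simp: valid_rect_def)
  consider "x = xlo a" "y = yhi b" | "x = xhi a" "y = yhi b" | "x = xlo a" "y = ylo b" | "x = xhi a" "y = ylo b"
    using px py p by auto
  then show ?thesis
  proof cases
    case 1
    show ?thesis
    proof (cases "ylo b < ylo a")
      case True
      then show ?thesis using 1 ia ib la lb d p
        by (intro exI[of _ a] exI[of _ "(xlo a, ylo a)"] exI[of _ b]) (auto simp: defs)
    next
      case F: False
      show ?thesis
      proof (cases "xhi b < xhi a")
        case True
        then show ?thesis using F 1 ia ib la lb d p
          by (intro exI[of _ b] exI[of _ "(xhi b, yhi b)"] exI[of _ a]) (auto simp: defs)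
      next
        case False
        then have "corners b \<inter> rect_set a = {} \<and> corners a \<inter> rect_set b = {}"
          using F 1 ia ib la lb d p by (auto simp: defs)
        then show ?thesis using nc by blast
      qed
    qed
  next
    case 2
    show ?thesis
    proof (cases "ylo b < ylo a")
      case True
      then show ?thesis using 2 ia ib la lb d p
        by (intro exI[of _ a] exI[of _ "(xhi a, ylo a)"] exI[of _ b]) (auto simp: defs)
    next
      case F: False
      show ?thesis
      proof (cases "xlo a < xlo b")
        case True
        then show ?thesis using F 2 ia ib la lb d p
          by (intro exI[of _ b] exI[of _ "(xlo b, yhi b)"] exI[of _ a]) (auto simp: defs)
      next
        case False
        then have "corners b \<inter> rect_set a = {} \<and> corners a \<inter> rect_set b = {}"
          using F 2 ia ib la lb d p by (auto simp: defs)
        then show ?thesis using nc by blast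
      qed
    qed
  next
    case 3
    show ?thesis
    proof (cases "yhi a < yhi b")
      case True
      then show ?thesis using 3 ia ib la lb d p
        by (intro exI[of _ a] exI[of _ "(xlo a, yhi a)"] exI[of _ b]) (auto simp: defs)
    next
      case F: False
      show ?thesis
      proof (cases "xhi b < xhi a")
        case True
        then show ?thesis using F 3 ia ib la lb d p
          by (intro exI[of _ b] exI[of _ "(xhi b, ylo b)"] exI[of _ a]) (auto simp: defs)
      next
        case False
        then have "corners b \<inter> rect_set a = {} \<and> corners a \<inter> rect_set b = {}"
          using F 3 ia ib la lb d p by (auto simp: defs)
        then show ?thesis using nc by blast
      qed
    qed
  next
    case 4
    show ?thesis
    proof (cases "yhi a < yhi b")
      case True
      then show ?thesis using 4 ia ib la lb d p
        by (intro exI[of _ a] exI[of _ "(xhi a, yhi a)"] exI[of _ b]) (auto simp: defs)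
    next
      case F: False
      show ?thesis
      proof (cases "xlo a < xlo b")
        case True
        then show ?thesis using F 4 ia ib la lb d p
          by (intro exI[of _ b] exI[of _ "(xlo b, ylo b)"] exI[of _ a]) (auto simp: defs)
      next
        case False
        then have "corners b \<inter> rect_set a = {} \<and> corners a \<inter> rect_set b = {}"
          using F 4 ia ib la lb d p by (auto simp: defs)
        then show ?thesis using nc by blast
      qed
    qed
  qed
qed


lemma boundary_split:
  assumes "p \<in> rect_boundary r" "p \<in> rect_boundary s"
    and d: "xlo r \<noteq> xlo s \<and> xlo r \<noteq> xhi s \<and> xhi r \<noteq> xlo s \<and> xhi r \<noteq> xhi s \<and>
         ylo r \<noteq> ylo s \<and> ylo r \<noteq> yhi s \<and> yhi r \<noteq> ylo s \<and> yhi r \<noteq> yhi s"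
  shows "((fst p = xlo r \<or> fst p = xhi r) \<and> (snd p = ylo s \<or> snd p = yhi s)) \<or>
         ((fst p = xlo s \<or> fst p = xhi s) \<and> (snd p = ylo r \<or> snd p = yhi r))"
  using assms unfolding rect_boundary_def by auto

lemma corners_card: "card (corners r) \<le> 4"
proof -
  have "card (corners r) \<le> card {(xlo r, yhi r), (xhi r, ylo r), (xhi r, yhi r)} + 1"
    unfolding corners_def by (rule card_insert_le_m1) auto
  also have "card {(xlo r, yhi r), (xhi r, ylo r), (xhi r, yhi r)} \<le> card {(xhi r, ylo r), (xhi r, yhi r)} + 1"
    by (rule card_insert_le_m1) auto
  also have "card {(xhi r, ylo r), (xhi r, yhi r)} \<le> 2"
    by (simp add: card_insert_if)
  finally show ?thesis by simp
qed

lemma nbr_bound: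
  assumes q: "\<forall>S\<subseteq>R. card S = q + 1 \<longrightarrow> \<not> (\<forall>r\<in>S. \<forall>s\<in>S. intersect r s)"
    and fin: "finite R" and v: "\<forall>r\<in>R. valid_rect r" and r: "r \<in> R" and c: "c \<in> rect_set r"
  shows "card {s\<in>R. s \<noteq> r \<and> c \<in> rect_set s} \<le> q - 1"
proof (rule ccontr)
  let ?N = "{s\<in>R. s \<noteq> r \<and> c \<in> rect_set s}"
  assume "\<not> ?thesis"
  then have "q \<le> card ?N" by linarith
  then obtain S' where S': "S' \<subseteq> ?N" "card S' = q"
    by (rule obtain_subset_with_card_n)
  have fS': "finite S'" by (rule finite_subset[OF S'(1)]) (simp add: fin)
  let ?S = "insert r S'"
  have "r \<notin> S'" using S' by auto
  then have "card ?S = q + 1" using S' fS' by simp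
  moreover have "?S \<subseteq> R" using S' r by auto
  moreover have "\<forall>x\<in>?S. \<forall>y\<in>?S. intersect x y"
  proof (intro ballI)
    fix x y assume "x \<in> ?S" "y \<in> ?S"
    then have "c \<in> rect_set x" "c \<in> rect_set y" using S' c by auto
    then show "intersect x y" unfolding intersect_def by blast
  qed
  ultimately show False using q by blast
qed

theorem lemma3:
  fixes q :: nat and R :: "rect set"
  assumes "q \<ge> 2"
    and "finite R"
    and "\<forall>r\<in>R. valid_rect r"
    and "general_position R"
    and "\<forall>r\<in>R. \<forall>s\<in>R. r \<noteq> s \<and> intersect r s \<longrightarrow> corner_intersection r s"
    and "\<forall>S\<subseteq>R. card S = q + 1 \<longrightarrow> \<not> (\<forall>r\<in>S. \<forall>s\<in>S. intersect r s)"
  shows "finite (joints R) \<and> card (joints R) \<le> 4 * q * card R"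
proof -
  define N where "N r c = {s\<in>R. s \<noteq> r \<and> c \<in> rect_set s}" for r c
  define T where "T = (\<Union>r\<in>R. \<Union>c\<in>corners r. (\<lambda>s. (r,c,s)) ` N r c)"
  have cr: "c \<in> rect_set r" if "c \<in> corners r" "r \<in> R" for r c
    using that assms(3) by (auto simp: corners_def rect_set_def valid_rect_def)
  have finT: "finite T" unfolding T_def N_def using assms(2)
    by (auto simp: corners_def)
  have "card T \<le> (\<Sum>r\<in>R. card (\<Union>c\<in>corners r. (\<lambda>s. (r,c,s)) ` N r c))"
    unfolding T_def by (rule card_UN_le) (rule assms(2))
  also have "\<dots> \<le> (\<Sum>r\<in>R. 4 * (q - 1))"
  proof (rule sum_mono)
    fix r assume r: "r \<in> R"
    have "card (\<Union>c\<in>corners r. (\<lambda>s. (r,c,s)) ` N r c) \<le> (\<Sum>c\<in>corners r. card ((\<lambda>s. (r,c,s)) ` N r c))"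
      by (rule card_UN_le) (simp add: corners_def)
    also have "\<dots> \<le> (\<Sum>c\<in>corners r. q - 1)"
    proof (rule sum_mono)
      fix c assume c: "c \<in> corners r"
      have "card ((\<lambda>s. (r,c,s)) ` N r c) \<le> card (N r c)" by (rule card_image_le) (simp add: N_def assms(2))
      also have "\<dots> \<le> q - 1" unfolding N_def
        by (rule nbr_bound[OF assms(6) assms(2) assms(3) r cr[OF c r]])
      finally show "card ((\<lambda>s. (r,c,s)) ` N r c) \<le> q - 1" .
    qed
    also have "\<dots> = card (corners r) * (q - 1)" by simp
    also have "\<dots> \<le> 4 * (q - 1)" using corners_card by (intro mult_right_mono) auto
    finally show "card (\<Union>c\<in>corners r. (\<lambda>s. (r,c,s)) ` N r c) \<le> 4 * (q - 1)" .
  qed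
  also have "\<dots> \<le> 4 * q * card R" by simp
  finally have cT: "card T \<le> 4 * q * card R" .
  have sub: "joints R \<subseteq> (\<lambda>(r,c,s). gmap r c s) ` T"
  proof
    fix p assume "p \<in> joints R"
    then obtain r s where rs: "r \<in> R" "s \<in> R" "r \<noteq> s" "p \<in> rect_boundary r" "p \<in> rect_boundary s"
      unfolding joints_def by blast
    have prs: "p \<in> rect_set r" "p \<in> rect_set s" using rs by (auto simp: rect_boundary_def)
    have "\<exists>a b. a \<in> R \<and> b \<in> R \<and> a \<noteq> b \<and> p \<in> rect_set a \<and> p \<in> rect_set b \<and>
        (fst p = xlo a \<or> fst p = xhi a) \<and> (snd p = ylo b \<or> snd p = yhi b)"
      using boundary_split[OF rs(4,5) gp_facts[OF assms(4) rs(1,2,3)]] rs prs by blast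
    then obtain a b where ab: "a \<in> R" "b \<in> R" "a \<noteq> b" "p \<in> rect_set a" "p \<in> rect_set b"
        "fst p = xlo a \<or> fst p = xhi a" "snd p = ylo b \<or> snd p = yhi b" by blast
    have "intersect a b" using ab unfolding intersect_def by blast
    then have ci: "corner_intersection a b" using assms(5) ab by blast
    have nc: "\<not> (corners b \<inter> rect_set a = {} \<and> corners a \<inter> rect_set b = {})"
    proof
      assume e: "corners b \<inter> rect_set a = {} \<and> corners a \<inter> rect_set b = {}"
      have "card (corners b \<inter> rect_set a) \<in> {1, 2} \<or> card (corners a \<inter> rect_set b) \<in> {1, 2}"
        using ci unfolding corner_intersection_def by blast
      then show False using e by simp
    qed
    obtain r' c s' where w: "(r' = a \<and> s' = b \<or> r' = b \<and> s' = a)" "c \<in> corners r'" "c \<in> rect_set s'" "gmap r' c s' = p"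
      using cover[OF _ _ gp_facts[OF assms(4) ab(1,2,3)] ab(4,5,6,7) nc] assms(3) ab(1,2) by meson
    have "(r',c,s') \<in> T" using w ab unfolding T_def N_def by auto
    then show "p \<in> (\<lambda>(r,c,s). gmap r c s) ` T" using w(4) by force
  qed
  have "finite (joints R)" using sub finT finite_subset by blast
  moreover have "card (joints R) \<le> 4 * q * card R"
    using card_mono[OF finite_imageI[OF finT] sub] card_image_le[OF finT, of "\<lambda>(r,c,s). gmap r c s"] cT
    by linarith
  ultimately show ?thesis by blast
qed

end
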